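(* Let $(S,\mathcal{E})$ be a qualitative evidence frame and let $\mathfrak{F}$ be a set of evidence allocation functions on $(S,\mathcal{E})$. Define $u:2^{\mathcal{E}}\to\tau_{\mathcal{E}}$ by $u(\mathbf{E})=\bigcup\mathbf{E}$ if $\mathbf{E}\neq\emptyset$ and $u(\emptyset)=S$. Then $\mathfrak{F}\cup\{u\}$ is a set of evidence allocation functions on $(S,\mathcal{E})$.
   Context: A qualitative evidence frame is a pair $(S,\mathcal{E})$ where $S$ is a finite nonempty set (of possible states) and $\mathcal{E}$ is a nonempty family of subsets of $S$ with $\emptyset\notin\mathcal{E}$ and $S\notin\mathcal{E}$. For any family $\mathbf{E}\subseteq 2^S$, $\tau_{\mathbf{E}}$ denotes the topology on $S$ generated by $\mathbf{E}$ (as a subbasis): it consists of $\emptyset$, $S$, all finite intersections of members of $\mathbf{E}$, and all arbitrary unions of such finite intersections. For $\mathbf{E}\subseteq\mathcal{E}$, an element $D\in\tau_{\mathbf{E}}$ is called dense in $\bigcup\mathbf{E}$ w.r.t. $\tau_{\mathbf{E}}$ if $D\cap T\neq\emptyset$ for every nonempty $T\in\tau_{\mathbf{E}}$. A set of evidence allocation functions on $(S,\mathcal{E})$ is a set $\mathfrak{F}$ of functions $2^{\mathcal{E}}\to\tau_{\mathcal{E}}$ such that for all $f,g\in\mathfrak{F}$: (1) $f(\emptyset)=S$; (2) for every nonempty $\mathbf{E}\subseteq\mathcal{E}$, either $f(\mathbf{E})=\emptyset$, or $f(\mathbf{E})\in\tau_{\mathbf{E}}$ and $f(\mathbf{E})$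 is dense in $\bigcup\mathbf{E}$ w.r.t. $\tau_{\mathbf{E}}$; (3) for every $\mathbf{E}\subseteq\mathcal{E}$, $f(\mathbf{E})\subseteq g(\mathbf{E})$ or $g(\mathbf{E})\subseteq f(\mathbf{E})$. *)

theory Defs
  imports Main
begin

definition qual_evidence_frame :: "'a set \<Rightarrow> 'a set set \<Rightarrow> bool" where
  "qual_evidence_frame S \<E> \<longleftrightarrow> finite S \<and> S \<noteq> {} \<and> \<E> \<noteq> {} \<and> \<E> \<subseteq> Pow S
     \<and> {} \<notin> \<E> \<and> S \<notin> \<E>"

definition fin_inters :: "'a set set \<Rightarrow> 'a set set" where
  "fin_inters B = {\<Inter> F | F. finite F \<and> F \<noteq> {} \<and> F \<subseteq> B}"

(* topology on S generated by B as a subbasis: empty set, S, and unions of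
   finite intersections (the empty union gives the empty set) *)
definition gen_topology :: "'a set \<Rightarrow> 'a set set \<Rightarrow> 'a set set" where
  "gen_topology S B = insert S {\<Union> U | U. U \<subseteq> fin_inters B}"

definition dense_wrt :: "'a set \<Rightarrow> 'a set set \<Rightarrow> 'a set \<Rightarrow> bool" where
  "dense_wrt S B D \<longleftrightarrow> D \<in> gen_topology S B \<and>
     (\<forall>T\<in>gen_topology S B. T \<noteq> {} \<longrightarrow> D \<inter> T \<noteq> {})"

definition evidence_allocation_functions ::
  "'a set \<Rightarrow> 'a set set \<Rightarrow> ('a set set \<Rightarrow> 'a set) set \<Rightarrow> bool" where
  "evidence_allocation_functions S \<E> \<FF> \<longleftrightarrow>
     (\<forall>f\<in>\<FF>.
        (\<forall>Es. Es \<subseteq> \<E> \<longrightarrow> f Es \<in> gen_topology S \<E>) \<and>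
        f {} = S \<and>
        (\<forall>Es. Es \<subseteq> \<E> \<and> Es \<noteq> {} \<longrightarrow>
           f Es = {} \<or> (f Es \<in> gen_topology S Es \<and> dense_wrt S Es (f Es))) \<and>
        (\<forall>g\<in>\<FF>. \<forall>Es. Es \<subseteq> \<E> \<longrightarrow> f Es \<subseteq> g Es \<or> g Es \<subseteq> f Es))"

end

theory Submission
  imports Defs
begin

lemma union_in_gen: "Es \<subseteq> B \<Longrightarrow> \<Union> Es \<in> gen_topology S B"
proof -
  assume a: "Es \<subseteq> B"
  have "Es \<subseteq> fin_inters B"
  proof
    fix e assume "e \<in> Es"
    then have "e = \<Inter>{e}" "finite {e}" "{e} \<noteq> {}" "{e} \<subseteq> B" using a by auto
    then show "e \<in> fin_inters B" unfolding fin_inters_def by blast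
  qed
  then show ?thesis unfolding gen_topology_def by blast
qed

lemma gen_sub: "T \<in> gen_topology S Es \<Longrightarrow> T = S \<or> T \<subseteq> \<Union> Es"
  unfolding gen_topology_def fin_inters_def by blast

theorem proposition2:
  fixes S :: "'a set" and \<E> :: "'a set set" and \<FF> :: "('a set set \<Rightarrow> 'a set) set"
  assumes "qual_evidence_frame S \<E>"
    and "evidence_allocation_functions S \<E> \<FF>"
  shows "evidence_allocation_functions S \<E>
           (\<FF> \<union> {(\<lambda>Es. if Es = {} then S else \<Union> Es)})"
proof -
  define u where "u = (\<lambda>Es::'a set set. if Es = {} then S else \<Union> Es)"
  have fr: "\<E> \<subseteq> Pow S" "{} \<notin> \<E>" using assms(1) unfolding qual_evidence_frame_def by auto
  note AF = assms(2)[unfolded evidence_allocation_functions_def]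
  have B: "f \<in> \<FF> \<Longrightarrow> (\<forall>Es. Es \<subseteq> \<E> \<longrightarrow> f Es \<in> gen_topology S \<E>) \<and>
        f {} = S \<and>
        (\<forall>Es. Es \<subseteq> \<E> \<and> Es \<noteq> {} \<longrightarrow>
           f Es = {} \<or> (f Es \<in> gen_topology S Es \<and> dense_wrt S Es (f Es))) \<and>
        (\<forall>g\<in>\<FF>. \<forall>Es. Es \<subseteq> \<E> \<longrightarrow> f Es \<subseteq> g Es \<or> g Es \<subseteq> f Es)" for f
    by (rule bspec[OF AF])
  have A1: "f Es \<in> gen_topology S \<E>" if "f \<in> \<FF>" "Es \<subseteq> \<E>" for f Es
    using conjunct1[OF B[OF that(1)]] that(2) by simp
  have A2: "f {} = S" if "f \<in> \<FF>" for f
    using conjunct1[OF conjunct2[OF B[OF that(1)]]] .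
  have A3: "f Es = {} \<or> (f Es \<in> gen_topology S Es \<and> dense_wrt S Es (f Es))"
    if "f \<in> \<FF>" "Es \<subseteq> \<E> \<and> Es \<noteq> {}" for f Es
    using conjunct1[OF conjunct2[OF conjunct2[OF B[OF that(1)]]]] that(2) by simp
  have A4: "f Es \<subseteq> g Es \<or> g Es \<subseteq> f Es" if "f \<in> \<FF>" "g \<in> \<FF>" "Es \<subseteq> \<E>" for f g Es
    using conjunct2[OF conjunct2[OF conjunct2[OF B[OF that(1)]]]] that(2,3) by simp
  have u1: "\<forall>Es. Es \<subseteq> \<E> \<longrightarrow> u Es \<in> gen_topology S \<E>"
  proof (intro allI impI)
    fix Es assume "Es \<subseteq> \<E>"
    then show "u Es \<in> gen_topology S \<E>"
      using union_in_gen[of Es \<E> S] unfolding u_def by (simp add: gen_topology_def)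
  qed
  have u3: "Es \<subseteq> \<E> \<Longrightarrow> Es \<noteq> {} \<Longrightarrow> u Es \<in> gen_topology S Es \<and> dense_wrt S Es (u Es)" for Es
  proof -
    assume a: "Es \<subseteq> \<E>" "Es \<noteq> {}"
    have m: "u Es \<in> gen_topology S Es" using a union_in_gen[of Es Es S] unfolding u_def by auto
    have "T \<in> gen_topology S Es \<Longrightarrow> T \<noteq> {} \<Longrightarrow> u Es \<inter> T \<noteq> {}" for T
    proof -
      assume t: "T \<in> gen_topology S Es" "T \<noteq> {}"
      obtain e where e: "e \<in> Es" using a(2) by blast
      then have "e \<noteq> {}" using a(1) fr(2) by blast
      then have ne: "\<Union> Es \<noteq> {}" using e by blast
      have sub: "\<Union> Es \<subseteq> S" using a(1) fr(1) by blast
      from gen_sub[OF t(1)] show ?thesis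
      proof
        assume "T = S" then show ?thesis using a ne sub unfolding u_def by auto
      next
        assume "T \<subseteq> \<Union> Es" then show ?thesis using a t unfolding u_def by auto
      qed
    qed
    then show ?thesis using m unfolding dense_wrt_def by blast
  qed
  have cmp: "f \<in> \<FF> \<Longrightarrow> Es \<subseteq> \<E> \<Longrightarrow> f Es \<subseteq> u Es \<or> u Es \<subseteq> f Es" for f Es
  proof -
    assume f: "f \<in> \<FF>" and e: "Es \<subseteq> \<E>"
    show ?thesis
    proof (cases "Es = {}")
      case True
      have "f {} = S" using A2[OF f] .
      then show ?thesis using True unfolding u_def by simp
    next
      case False
      then have "f Es = {} \<or> f Es \<in> gen_topology S Es" using A3[OF f] e by blast
      moreover have "\<Union> Es \<subseteq> S" using e fr(1) by blast
      moreover have "u Es = \<Union> Es" using False unfolding u_def by simp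
      ultimately show ?thesis using gen_sub[of "f Es" S Es] by blast
    qed
  qed
  have "evidence_allocation_functions S \<E> (\<FF> \<union> {u})"
    unfolding evidence_allocation_functions_def
  proof (intro ballI conjI)
    fix f assume f: "f \<in> \<FF> \<union> {u}"
    note F = assms(2)[unfolded evidence_allocation_functions_def]
    show "\<forall>Es. Es \<subseteq> \<E> \<longrightarrow> f Es \<in> gen_topology S \<E>"
    proof (cases "f \<in> \<FF>")
      case True then show ?thesis using A1 A2 A3 by simp
    next
      case False then have "f = u" using f by blast
      then show ?thesis using u1 by simp
    qed
    show "f {} = S"
    proof (cases "f \<in> \<FF>")
      case True then show ?thesis using A1 A2 A3 by simp
    next
      case False then have "f = u" using f by blast
      then show ?thesis unfolding u_def by simp
    qed
    show "\<forall>Es. Es \<subseteq> \<E> \<and> Es \<noteq> {} \<longrightarrow> f Es = {} \<or> (f Es \<in> gen_topology S Es \<and> dense_wrt S Es (f Es))"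
    proof (cases "f \<in> \<FF>")
      case True then show ?thesis using A1 A2 A3 by simp
    next
      case False then have "f = u" using f by blast
      then show ?thesis using u3 by simp
    qed
    fix g assume g: "g \<in> \<FF> \<union> {u}"
    show "\<forall>Es. Es \<subseteq> \<E> \<longrightarrow> f Es \<subseteq> g Es \<or> g Es \<subseteq> f Es"
    proof (intro allI impI)
      fix Es assume e: "Es \<subseteq> \<E>"
      show "f Es \<subseteq> g Es \<or> g Es \<subseteq> f Es"
      proof (cases "f \<in> \<FF>")
        case fT: True
        show ?thesis
        proof (cases "g \<in> \<FF>")
          case True then show ?thesis using A4[OF fT True e] by simp
        next
          case False then have "g = u" using g by blast
          then show ?thesis using cmp[OF fT e] by simp
        qed
      next
        case False then have fu: "f = u" using f by blast
        show ?thesis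
        proof (cases "g \<in> \<FF>")
          case True then show ?thesis using fu cmp[OF True e] by blast
        next
          case False then have "g = u" using g by blast
          then show ?thesis using fu by simp
        qed
      qed
    qed
  qed
  then show ?thesis unfolding u_def .
qed

end
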